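(* Let $n\ge1$ and $\kappa\in I'_n$. Then $$\frac{1}{(2\pi)^n}\,c^{(n)}_\kappa\,\mathbf{e}\!\left[\frac12\sum_{l=1}^n\left(\omega^{(n)}_{\kappa,l}-\frac12\right)\right]\frac{1}{d_n}\,c^{(n)}_{d_n-\kappa}=\frac{1}{d_n}\,p_n\!\left(\mathbf{e}\!\left[(-1)^{n-1}\omega^{(n)}_{\kappa,1}\right]\right).$$
   Context: Fix integers $a_1,\dots,a_n\ge2$, $d_0=1$, $d_i=a_1\cdots a_i$, $\mathbf{e}[\alpha]=\exp(2\pi\sqrt{-1}\alpha)$. $I'_n=\{\kappa\in\{1,\dots,d_n\}\mid a_n\nmid\kappa\}$ (note $d_n-\kappa\in I'_n$ for $\kappa\in I'_n$). For $\kappa\in I'_n$, $\omega^{(n)}_{\kappa,i}=(-1)^{i-1}\frac{d_{i-1}}{d_n}\kappa-\lfloor(-1)^{i-1}\frac{d_{i-1}}{d_n}\kappa\rfloor$; $c^{(n)}_\kappa=\prod_{l=1}^n\Gamma(1-\omega^{(n)}_{\kappa,l})\cdot\prod_{i=1}^m(1-\mathbf{e}[\omega^{(n)}_{\kappa,2i-1}])$ if $n=2m-1$ and $c^{(n)}_\kappa=\prod_{l=1}^n\Gamma(1-\omega^{(n)}_{\kappa,l})\cdot\prod_{i=1}^m(1-\mathbf{e}[\omega^{(n)}_{\kappa,2i}])$ if $n=2m$. $p_n(t)=\prod_{i=1}^n(1-t^{d_{i-1}})^{(-1)^{n-i}}$ (a polynomial in $t$). *)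

theory Defs
  imports "HOL-Analysis.Analysis" "HOL-Computational_Algebra.Polynomial"
begin

text \<open>The sequence a_1,...,a_n is given as a function a :: nat => nat (only a 1 .. a n matter).\<close>

definition dd :: "(nat \<Rightarrow> nat) \<Rightarrow> nat \<Rightarrow> nat" where
  "dd a i = (\<Prod>j\<in>{1..i}. a j)"

definition ee :: "real \<Rightarrow> complex" where
  "ee \<alpha> = exp (2 * of_real pi * \<i> * of_real \<alpha>)"

definition Iprime :: "(nat \<Rightarrow> nat) \<Rightarrow> nat \<Rightarrow> nat set" where
  "Iprime a n = {\<kappa>. \<kappa> \<in> {1..dd a n} \<and> \<not> (a n dvd \<kappa>)}"

definition omega :: "(nat \<Rightarrow> nat) \<Rightarrow> nat \<Rightarrow> nat \<Rightarrow> nat \<Rightarrow> real" where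
  "omega a n \<kappa> i =
     (let x = (-1) ^ (i - 1) * (real (dd a (i - 1)) / real (dd a n)) * real \<kappa>
      in x - of_int \<lfloor>x\<rfloor>)"

definition cc :: "(nat \<Rightarrow> nat) \<Rightarrow> nat \<Rightarrow> nat \<Rightarrow> complex" where
  "cc a n \<kappa> =
     complex_of_real (\<Prod>l\<in>{1..n}. Gamma (1 - omega a n \<kappa> l)) *
     (if odd n then (\<Prod>i\<in>{1..(n + 1) div 2}. 1 - ee (omega a n \<kappa> (2 * i - 1)))
      else (\<Prod>i\<in>{1..n div 2}. 1 - ee (omega a n \<kappa> (2 * i))))"

text \<open>p_n(t) = prod_{i=1}^n (1 - t^{d_{i-1}})^{(-1)^{n-i}}, which is a polynomial; it is
  realised as the exact quotient of the numerator factors (n-i even) by the denominator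
  factors (n-i odd) in the polynomial ring.\<close>
definition pp :: "(nat \<Rightarrow> nat) \<Rightarrow> nat \<Rightarrow> complex poly" where
  "pp a n =
     (\<Prod>i\<in>{i\<in>{1..n}. even (n - i)}. 1 - monom 1 (dd a (i - 1))) div
     (\<Prod>i\<in>{i\<in>{1..n}. odd (n - i)}. 1 - monom 1 (dd a (i - 1)))"

end

theory Submission
  imports Defs
begin


lemma ee_cis: "ee y = cis (2 * pi * y)"
  unfolding ee_def cis_conv_exp by (simp add: mult_ac)

lemma ee_add: "ee (x + y) = ee x * ee y"
  by (simp add: ee_cis cis_mult distrib_left)

lemma ee_int: "k \<in> \<int> \<Longrightarrow> ee k = 1"
  by (simp add: ee_cis)

lemma ee_diff_int: "x - y \<in> \<int> \<Longrightarrow> ee x = ee y"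
proof -
  assume "x - y \<in> \<int>"
  then have "ee x = ee y * ee (x - y)" using ee_add[of y "x-y"] by simp
  with \<open>x - y \<in> \<int>\<close> show ?thesis by (simp add: ee_int)
qed

lemma ee_power: "ee y ^ m = ee (real m * y)"
proof -
  have "ee y ^ m = cis (2 * pi * y) ^ m" by (simp add: ee_cis)
  also have "\<dots> = cis (real m * (2 * pi * y))" by (rule Complex.DeMoivre)
  finally show ?thesis by (simp add: ee_cis mult_ac)
qed

lemma ee_eq_1: "ee y = 1 \<Longrightarrow> y \<in> \<int>"
proof -
  assume "ee y = 1"
  then have "exp (2 * of_real pi * \<i> * of_real y) = 1" by (simp add: ee_def)
  then obtain m :: int where "Im (2 * of_real pi * \<i> * of_real y) = of_int (2*m) * pi"
    by (auto simp: exp_eq_1)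
  then have "y = of_int m" by simp
  then show ?thesis by simp
qed

lemma factor_id:
  fixes w :: real
  assumes "0 < w" "w < 1"
  shows "complex_of_real (Gamma (1 - w)) * complex_of_real (Gamma w) * (1 - ee (- w))
         * ee ((1/2) * (w - 1/2)) = 2 * of_real pi"
proof -
  have s: "sin (pi * w) > 0" using assms by (intro sin_gt_zero) auto
  have "Gamma (complex_of_real w) * Gamma (1 - complex_of_real w) = of_real pi / sin (of_real pi * of_real w)"
    by (rule Gamma_reflection_complex)
  then have g: "Gamma w * Gamma (1 - w) = pi / sin (pi * w)"
    by (metis Gamma_complex_of_real of_real_1 of_real_diff of_real_divide of_real_eq_iff of_real_mult sin_of_real)
  have "(1 - ee (- w)) * ee ((1/2) * (w - 1/2)) = ee ((1/2) * (w - 1/2)) - ee (-w + (1/2) * (w - 1/2))"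
    using ee_add[of "-w" "(1/2) * (w - 1/2)"] by (simp add: algebra_simps)
  also have "\<dots> = cis (pi * w - pi/2) - cis (- pi * w - pi/2)"
    by (simp add: ee_cis algebra_simps)
  also have "\<dots> = 2 * of_real (sin (pi * w))"
    by (simp add: complex_eq_iff cos_diff sin_diff)
  finally have e: "(1 - ee (- w)) * ee ((1/2) * (w - 1/2)) = 2 * of_real (sin (pi * w))" .
  have "complex_of_real (Gamma (1 - w)) * complex_of_real (Gamma w) * (1 - ee (- w))
         * ee ((1/2) * (w - 1/2)) = complex_of_real (Gamma w * Gamma (1 - w)) * ((1 - ee (- w)) * ee ((1/2) * (w - 1/2)))"
    by (simp add: mult_ac)
  also have "\<dots> = complex_of_real (pi / sin (pi * w)) * (2 * of_real (sin (pi * w)))" by (simp only: g e)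
  also have "\<dots> = 2 * of_real pi" using s by simp
  finally show ?thesis .
qed

lemma ee_sum: "finite A \<Longrightarrow> ee (sum h A) = (\<Prod>x\<in>A. ee (h x))"
  by (induct A rule: finite_induct) (simp_all add: ee_add ee_int)

lemma dd_pos: "\<forall>i\<in>{1..n}. a i \<ge> 2 \<Longrightarrow> j \<le> n \<Longrightarrow> dd a j > 0"
  unfolding dd_def by (intro prod_pos) force

lemma dd_dvd: "j \<le> k \<Longrightarrow> dd a j dvd dd a k"
  unfolding dd_def by (intro prod_dvd_prod_subset) auto

lemma dd_Suc: "dd a (Suc m) = dd a m * a (Suc m)"
  unfolding dd_def by (simp add: prod.nat_ivl_Suc' mult_ac)

lemma dd_0: "dd a 0 = 1" by (simp add: dd_def)

lemma nonint:
  assumes A: "\<forall>i\<in>{1..n}. a i \<ge> 2" and n: "n \<ge> 1" and k: "\<not> a n dvd \<kappa>"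
    and l: "l \<in> {1..n}"
  shows "real (dd a (l-1)) * real \<kappa> / real (dd a n) \<notin> \<int>"
proof
  assume "real (dd a (l-1)) * real \<kappa> / real (dd a n) \<in> \<int>"
  then obtain m where m: "real (dd a (l-1)) * real \<kappa> / real (dd a n) = of_int m"
    by (auto elim: Ints_cases)
  have pn: "dd a n > 0" using dd_pos[OF A] by simp
  have p: "dd a (l-1) > 0" using dd_pos[OF A, of "l-1"] l by auto
  obtain q where q: "dd a (n-1) = dd a (l-1) * q" using dd_dvd[of "l-1" "n-1" a] l by (metis atLeastAtMost_iff diff_le_mono dvdE)
  have dn: "dd a n = dd a (n-1) * a n" using dd_Suc[of a "n-1"] n by simp
  have "real (dd a (l-1)) * real \<kappa> = of_int m * real (dd a n)" using m pn by (simp add: field_simps)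
  then have "real (dd a (l-1)) * real \<kappa> = real (dd a (l-1)) * (of_int m * real q * real (a n))"
  proof -
    have "real (dd a n) = real (dd a (l-1)) * real q * real (a n)" using dn q by simp
    then show ?thesis using \<open>real (dd a (l-1)) * real \<kappa> = of_int m * real (dd a n)\<close> by algebra
  qed
  then have "real \<kappa> = of_int m * real q * real (a n)" using p by simp
  then have "real_of_int (int \<kappa>) = real_of_int (m * int q * int (a n))" by simp
  then have "int \<kappa> = m * int q * int (a n)" by (simp only: of_int_eq_iff)
  then have "int (a n) dvd int \<kappa>" by simp
  then show False using k by simp
qed

lemma omega_frac: "omega a n \<kappa> i = frac ((-1) ^ (i - 1) * (real (dd a (i - 1)) / real (dd a n)) * real \<kappa>)"
  by (simp add: omega_def frac_def Let_def)

lemma Ints_sign: "((-1::real) ^ k * y \<in> \<int>) = (y \<in> \<int>)"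
  by (cases "even k") (auto simp: minus_in_Ints_iff)

lemma omega_bounds:
  assumes A: "\<forall>i\<in>{1..n}. a i \<ge> 2" and n: "n \<ge> 1" and k: "\<not> a n dvd \<kappa>"
    and l: "l \<in> {1..n}"
  shows "0 < omega a n \<kappa> l \<and> omega a n \<kappa> l < 1"
proof -
  have "(-1) ^ (l - 1) * (real (dd a (l - 1)) / real (dd a n)) * real \<kappa> \<notin> \<int>"
    using nonint[OF A n k l] Ints_sign[of "l-1" "real (dd a (l-1)) * real \<kappa> / real (dd a n)"]
    by (simp add: mult_ac)
  then have "frac ((-1) ^ (l - 1) * (real (dd a (l - 1)) / real (dd a n)) * real \<kappa>) \<noteq> 0" by simp
  then show ?thesis unfolding omega_frac using frac_ge_0 frac_lt_1
    by (metis less_eq_real_def)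
qed

lemma omega_compl:
  assumes A: "\<forall>i\<in>{1..n}. a i \<ge> 2" and n: "n \<ge> 1" and k: "\<not> a n dvd \<kappa>"
    and l: "l \<in> {1..n}" and kl: "\<kappa> \<le> dd a n"
  shows "omega a n (dd a n - \<kappa>) l = 1 - omega a n \<kappa> l"
proof -
  define x where "x = (-1) ^ (l - 1) * (real (dd a (l - 1)) / real (dd a n)) * real \<kappa>"
  have pn: "dd a n > 0" using dd_pos[OF A] by simp
  have xi: "x \<notin> \<int>"
    using nonint[OF A n k l] Ints_sign[of "l-1" "real (dd a (l-1)) * real \<kappa> / real (dd a n)"]
    by (simp add: mult_ac x_def)
  have "(-1) ^ (l - 1) * (real (dd a (l - 1)) / real (dd a n)) * real (dd a n - \<kappa>)
     = of_int ((-1) ^ (l - 1) * int (dd a (l - 1))) + (- x)"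
    using pn kl by (simp add: x_def of_nat_diff field_simps)
  then have "omega a n (dd a n - \<kappa>) l = frac (- x)"
    unfolding omega_frac by (simp only: frac_add_of_int_left)
  also have "\<dots> = 1 - frac x" using xi by (simp add: frac_neg)
  finally show ?thesis by (simp add: omega_frac x_def)
qed

lemma omega_power:
  assumes A: "\<forall>i\<in>{1..n}. a i \<ge> 2" and n: "n \<ge> 1" and i: "i \<in> {1..n}"
  shows "ee ((-1) ^ (n - 1) * omega a n \<kappa> 1) ^ dd a (i - 1)
       = ee ((-1) ^ (n - i) * omega a n \<kappa> i)"
proof -
  define x1 where "x1 = (real (dd a 0) / real (dd a n)) * real \<kappa>"
  define xi where "xi = (-1) ^ (i - 1) * (real (dd a (i - 1)) / real (dd a n)) * real \<kappa>"
  have w1: "omega a n \<kappa> 1 = x1 - of_int \<lfloor>x1\<rfloor>" by (simp add: omega_def x1_def Let_def)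
  have wi: "omega a n \<kappa> i = xi - of_int \<lfloor>xi\<rfloor>" by (simp add: omega_def xi_def Let_def)
  have sg: "(-1::real) ^ (n - i) * (-1) ^ (i - 1) = (-1) ^ (n - 1)"
    using i by (simp add: power_add[symmetric])
  have key: "real (dd a (i - 1)) * ((-1) ^ (n - 1) * x1) = (-1) ^ (n - i) * xi"
    unfolding x1_def xi_def dd_0 using sg[symmetric]
    by (simp add: mult_ac)
  have "real (dd a (i - 1)) * ((-1) ^ (n - 1) * omega a n \<kappa> 1) - (-1) ^ (n - i) * omega a n \<kappa> i
     = of_int (- (int (dd a (i - 1)) * (-1) ^ (n - 1) * \<lfloor>x1\<rfloor>) + (-1) ^ (n - i) * \<lfloor>xi\<rfloor>)"
    unfolding w1 wi using key by (simp add: algebra_simps)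
  then have "real (dd a (i - 1)) * ((-1) ^ (n - 1) * omega a n \<kappa> 1) - (-1) ^ (n - i) * omega a n \<kappa> i \<in> \<int>"
    by (metis Ints_of_int)
  then show ?thesis by (simp add: ee_power ee_diff_int)
qed



lemma alt_prod:
  fixes n :: nat
  shows "(if odd n then (\<Prod>i\<in>{1..(n+1) div 2}. f (2*i-1)) else (\<Prod>i\<in>{1..n div 2}. f (2*i)))
   = (\<Prod>i\<in>{i\<in>{1..n}. even (n-i)}. f i)"
proof (cases "odd n")
  case True
  have "(\<Prod>i\<in>{1..(n+1) div 2}. f (2*i-1)) = (\<Prod>i\<in>{i\<in>{1..n}. even (n-i)}. f i)"
    by (rule prod.reindex_bij_witness[where i="\<lambda>i. (i+1) div 2" and j="\<lambda>i. 2*i-1"])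
       (use True in \<open>auto; presburger\<close>)+
  then show ?thesis using True by simp
next
  case False
  have "(\<Prod>i\<in>{1..n div 2}. f (2*i)) = (\<Prod>i\<in>{i\<in>{1..n}. even (n-i)}. f i)"
    by (rule prod.reindex_bij_witness[where i="\<lambda>i. i div 2" and j="\<lambda>i. 2*i"])
       (use False in \<open>auto; presburger\<close>)+
  then show ?thesis using False by simp
qed

lemma one_minus_dvd: "(1 - (y::'a::comm_ring_1)) dvd (1 - y^c)"
proof
  show "1 - y^c = (1 - y) * (\<Sum>i<c. y^i)"
    using power_diff_1_eq[of y c] by (simp add: algebra_simps)
qed

lemma fp_dvd: "k dvd m \<Longrightarrow> (1 - monom (1::complex) k) dvd (1 - monom 1 m)"
proof -
  assume "k dvd m"
  then obtain c where "m = k * c" by (auto elim: dvdE)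
  then have "monom (1::complex) m = monom 1 k ^ c" by (simp add: monom_power)
  then show ?thesis using one_minus_dvd[of "monom (1::complex) k" c] by simp
qed

lemma pp_dvd:
  "(\<Prod>i\<in>{i\<in>{1..n}. odd (n - i)}. 1 - monom (1::complex) (dd a (i - 1))) dvd
   (\<Prod>i\<in>{i\<in>{1..n}. even (n - i)}. 1 - monom 1 (dd a (i - 1)))"
proof -
  let ?f = "\<lambda>i. 1 - monom (1::complex) (dd a (i - 1))"
  let ?So = "{i\<in>{1..n}. odd (n - i)}"
  have "prod ?f ?So dvd (\<Prod>i\<in>?So. ?f (Suc i))"
    by (rule prod_dvd_prod) (auto intro!: fp_dvd dd_dvd)
  also have "(\<Prod>i\<in>?So. ?f (Suc i)) = prod ?f (Suc ` ?So)"
    by (subst prod.reindex) auto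
  also have "\<dots> dvd prod ?f {i\<in>{1..n}. even (n - i)}"
    by (rule prod_dvd_prod_subset) (auto, presburger+)
  finally show ?thesis .
qed

lemma poly_div_eval:
  fixes N Q :: "complex poly"
  assumes "Q dvd N" "poly Q t \<noteq> 0"
  shows "poly (N div Q) t = poly N t / poly Q t"
proof -
  have "N div Q * Q = N" using assms(1) by simp
  then have "poly (N div Q) t * poly Q t = poly N t" by (metis poly_mult)
  then show ?thesis using assms(2) by (simp add: field_simps)
qed

lemma alg:
  fixes G1 G2 EE EM OM X P d :: complex
  assumes "G1 * G2 * (EM * OM) * X = P" "P \<noteq> 0" "OM \<noteq> 0"
  shows "1 / P * (G1 * EE) * X * (1 / d) * (G2 * EM) = 1 / d * (EE / OM)"
proof -
  have "G1 * G2 * EM * X = P / OM" using assms by (simp add: field_simps)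
  then have "1 / P * (G1 * EE) * X * (1 / d) * (G2 * EM) = EE / (P * d) * (P / OM)"
    by (metis (no_types, lifting) ab_semigroup_mult_class.mult_ac(1) mult.commute times_divide_eq_left times_divide_eq_right divide_divide_eq_left mult_1)
  then show ?thesis using assms by (simp add: field_simps)
qed



theorem lemma4p1:
  fixes a :: "nat \<Rightarrow> nat" and n \<kappa> :: nat
  assumes "\<forall>i\<in>{1..n}. a i \<ge> 2"
    and "n \<ge> 1"
    and "\<kappa> \<in> Iprime a n"
  shows "1 / (2 * of_real pi) ^ n * cc a n \<kappa>
           * ee ((1/2) * (\<Sum>l\<in>{1..n}. omega a n \<kappa> l - 1/2))
           * (1 / of_nat (dd a n)) * cc a n (dd a n - \<kappa>)
         = 1 / of_nat (dd a n) * poly (pp a n) (ee ((-1) ^ (n - 1) * omega a n \<kappa> 1))"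
proof -
  define w where "w = omega a n \<kappa>"
  define Se where "Se = {i\<in>{1..n}. even (n-i)}"
  define So where "So = {i\<in>{1..n}. odd (n-i)}"
  have k: "\<not> a n dvd \<kappa>" and kl: "\<kappa> \<le> dd a n" using assms(3) by (auto simp: Iprime_def)
  have wb: "\<And>l. l\<in>{1..n} \<Longrightarrow> 0 < w l \<and> w l < 1"
    using omega_bounds[OF assms(1,2) k] w_def by blast
  have wc: "\<And>l. l\<in>{1..n} \<Longrightarrow> omega a n (dd a n - \<kappa>) l = 1 - w l"
    using omega_compl[OF assms(1,2) k _ kl] w_def by blast
  have nz: "\<And>i. i\<in>{1..n} \<Longrightarrow> 1 - ee (- w i) \<noteq> 0"
  proof
    fix i assume i: "i\<in>{1..n}" and "1 - ee (- w i) = 0"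
    then have "ee (- w i) = 1" by simp
    then have "- w i \<in> \<int>" by (rule ee_eq_1)
    then have "w i \<in> \<int>" by (simp add: minus_in_Ints_iff)
    then obtain m where m: "w i = of_int m" by (auto elim: Ints_cases)
    then have "0 < m" "m < 1" using wb[OF i] by auto
    then show False by simp
  qed
  have cc1: "cc a n \<kappa> = of_real (\<Prod>l\<in>{1..n}. Gamma (1 - w l)) * (\<Prod>i\<in>Se. 1 - ee (w i))"
    unfolding cc_def alt_prod[of n "\<lambda>j. 1 - ee (omega a n \<kappa> j)"] w_def Se_def ..
  have cc2: "cc a n (dd a n - \<kappa>) = of_real (\<Prod>l\<in>{1..n}. Gamma (w l)) * (\<Prod>i\<in>Se. 1 - ee (- w i))"
    unfolding cc_def alt_prod[of n "\<lambda>j. 1 - ee (omega a n (dd a n - \<kappa>) j)"]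
  proof (intro arg_cong2[where f="(*)"] arg_cong[where f=of_real])
    show "(\<Prod>l\<in>{1..n}. Gamma (1 - omega a n (dd a n - \<kappa>) l)) = (\<Prod>l\<in>{1..n}. Gamma (w l))"
      by (rule prod.cong) (simp_all add: wc)
    show "(\<Prod>i\<in>{i \<in> {1..n}. even (n - i)}. 1 - ee (omega a n (dd a n - \<kappa>) i)) = (\<Prod>i\<in>Se. 1 - ee (- w i))"
      unfolding Se_def
    proof (rule prod.cong)
      fix i assume "i \<in> {i \<in> {1..n}. even (n - i)}"
      then have "omega a n (dd a n - \<kappa>) i = 1 - w i" using wc by simp
      moreover have "ee (1 - w i) = ee (- w i)" by (rule ee_diff_int) simp
      ultimately show "1 - ee (omega a n (dd a n - \<kappa>) i) = 1 - ee (- w i)" by simp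
    qed simp
  qed
  define t where "t = ee ((-1)^(n-1) * w 1)"
  have tp: "\<And>i. i\<in>{1..n} \<Longrightarrow> t ^ dd a (i-1) = (if even (n-i) then ee (w i) else ee (- w i))"
    unfolding t_def w_def using omega_power[OF assms(1,2)] by (simp add: minus_one_power_iff)
  have OMnz: "(\<Prod>i\<in>So. 1 - ee (- w i)) \<noteq> 0"
    using nz unfolding So_def by (simp add: prod_zero_iff)
  have pp: "poly (pp a n) t = (\<Prod>i\<in>Se. 1 - ee (w i)) / (\<Prod>i\<in>So. 1 - ee (- w i))"
  proof -
    have N: "poly (\<Prod>i\<in>{i\<in>{1..n}. even (n - i)}. 1 - monom 1 (dd a (i - 1))) t = (\<Prod>i\<in>Se. 1 - ee (w i))"
      unfolding Se_def poly_prod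
    proof (rule prod.cong)
      fix i assume "i \<in> {i\<in>{1..n}. even (n - i)}"
      then have "i \<in> {1..n}" "even (n - i)" by auto
      then show "poly (1 - monom 1 (dd a (i - 1))) t = 1 - ee (w i)"
        using tp[of i] by (simp add: poly_monom)
    qed simp
    have Q: "poly (\<Prod>i\<in>{i\<in>{1..n}. odd (n - i)}. 1 - monom 1 (dd a (i - 1))) t = (\<Prod>i\<in>So. 1 - ee (- w i))"
      unfolding So_def poly_prod
    proof (rule prod.cong)
      fix i assume "i \<in> {i\<in>{1..n}. odd (n - i)}"
      then have "i \<in> {1..n}" "odd (n - i)" by auto
      then show "poly (1 - monom 1 (dd a (i - 1))) t = 1 - ee (- w i)"
        using tp[of i] by (simp add: poly_monom)
    qed simp
    show ?thesis unfolding pp_def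
      by (subst poly_div_eval[OF pp_dvd]) (simp_all only: N Q OMnz, simp)
  qed
  have X: "ee ((1/2) * (\<Sum>l\<in>{1..n}. w l - 1/2)) = (\<Prod>l\<in>{1..n}. ee ((1/2) * (w l - 1/2)))"
    by (simp add: sum_distrib_left ee_sum)
  have D: "(\<Prod>l\<in>{1..n}. complex_of_real (Gamma (1 - w l)) * complex_of_real (Gamma (w l))
      * (1 - ee (- w l)) * ee ((1/2) * (w l - 1/2))) = (2 * of_real pi) ^ n"
  proof -
    have "(\<Prod>l\<in>{1..n}. complex_of_real (Gamma (1 - w l)) * complex_of_real (Gamma (w l))
      * (1 - ee (- w l)) * ee ((1/2) * (w l - 1/2))) = (\<Prod>l\<in>{1..n}. 2 * of_real pi)"
    proof (rule prod.cong)
      fix l assume "l \<in> {1..n}"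
      then show "complex_of_real (Gamma (1 - w l)) * complex_of_real (Gamma (w l))
      * (1 - ee (- w l)) * ee ((1/2) * (w l - 1/2)) = 2 * of_real pi"
        using wb[of l] by (intro factor_id) auto
    qed simp
    then show ?thesis by simp
  qed
  have U: "{1..n} = Se \<union> So" "Se \<inter> So = {}" unfolding Se_def So_def by auto
  have D2: "of_real (\<Prod>l\<in>{1..n}. Gamma (1 - w l)) * of_real (\<Prod>l\<in>{1..n}. Gamma (w l))
      * ((\<Prod>i\<in>Se. 1 - ee (- w i)) * (\<Prod>i\<in>So. 1 - ee (- w i)))
      * (\<Prod>l\<in>{1..n}. ee ((1/2) * (w l - 1/2))) = (2 * of_real pi) ^ n"
  proof -
    have "(\<Prod>l\<in>{1..n}. 1 - ee (- w l)) = (\<Prod>i\<in>Se. 1 - ee (- w i)) * (\<Prod>i\<in>So. 1 - ee (- w i))"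
      unfolding U(1) by (rule prod.union_disjoint) (use U in \<open>auto simp: Se_def So_def\<close>)
    then show ?thesis using D by (simp add: prod.distrib of_real_prod)
  qed
  have P: "(2 * complex_of_real pi) ^ n \<noteq> 0" by simp
  have "1 / (2 * of_real pi) ^ n * cc a n \<kappa>
           * ee ((1/2) * (\<Sum>l\<in>{1..n}. w l - 1/2))
           * (1 / of_nat (dd a n)) * cc a n (dd a n - \<kappa>)
         = 1 / of_nat (dd a n) * poly (pp a n) t"
    unfolding cc1 cc2 X pp by (rule alg[OF D2 P OMnz])
  then show ?thesis by (simp add: w_def t_def)
qed


end
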